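(* Let $P^\ast$ be an $n\times k$ minimal matrix representation of a $0/1$-polytope with $k$ vertices. Then for each $j\in\{1,\dots,k-1\}$, the submatrix $P_j^\ast$ of $P^\ast$ consisting of its $j$ leftmost columns is a minimal matrix representation of a $0/1$-polytope with $j$ vertices.
   Context: For $x\in\{0,1\}^n$ its column number is $v_n^\top x$ with $v_n^\top=(2^0,2^1,\dots,2^{n-1})$. For an $n\times m$ $0/1$-matrix $P$ with pairwise distinct columns, $\nu(P)$ is the vector of its column numbers sorted increasingly. $P$ is a minimal matrix representation (of the $0/1$-polytope whose vertices are its columns) if its column numbers $v_n^\top P$ are strictly increasing from left to right and $\nu(P)\preceq\nu(Q)$ in lexicographic order for every matrix $Q$ obtained from $P$ by complementing (exchanging $0\leftrightarrow1$) the entries of some subset of its rows and then permuting its rows. *)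

theory Defs
  imports Main "HOL-Combinatorics.Permutations"
begin

text \<open>An n x m 0/1-matrix is represented by a function P :: nat => nat => bool,
  where P i j is the entry in row i < n and column j < m (True = 1, False = 0).
  Entries outside the index range are irrelevant.\<close>

definition colnum :: "nat \<Rightarrow> (nat \<Rightarrow> nat \<Rightarrow> bool) \<Rightarrow> nat \<Rightarrow> nat" where
  "colnum n P j = (\<Sum>i<n. of_bool (P i j) * 2 ^ i)"

definition distinct_cols :: "nat \<Rightarrow> nat \<Rightarrow> (nat \<Rightarrow> nat \<Rightarrow> bool) \<Rightarrow> bool" where
  "distinct_cols n m P \<longleftrightarrow> (\<forall>j<m. \<forall>j'<m. j \<noteq> j' \<longrightarrow> (\<exists>i<n. P i j \<noteq> P i j'))"

definition nu :: "nat \<Rightarrow> nat \<Rightarrow> (nat \<Rightarrow> nat \<Rightarrow> bool) \<Rightarrow> nat list" where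
  "nu n m P = sort (map (colnum n P) [0..<m])"

definition flip_perm :: "nat set \<Rightarrow> (nat \<Rightarrow> nat) \<Rightarrow> (nat \<Rightarrow> nat \<Rightarrow> bool) \<Rightarrow> (nat \<Rightarrow> nat \<Rightarrow> bool)" where
  "flip_perm S \<sigma> P = (\<lambda>i j. if \<sigma> i \<in> S then \<not> P (\<sigma> i) j else P (\<sigma> i) j)"

definition minimal_matrix_rep :: "nat \<Rightarrow> nat \<Rightarrow> (nat \<Rightarrow> nat \<Rightarrow> bool) \<Rightarrow> bool" where
  "minimal_matrix_rep n m P \<longleftrightarrow>
     distinct_cols n m P \<and>
     (\<forall>j j'. j < j' \<and> j' < m \<longrightarrow> colnum n P j < colnum n P j') \<and>
     (\<forall>S \<sigma>. S \<subseteq> {..<n} \<and> \<sigma> permutes {..<n} \<longrightarrow>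
        lexordp_eq (nu n m P) (nu n m (flip_perm S \<sigma> P)))"

end

theory Submission
  imports Defs
begin

lemma lex_char:
  fixes x y :: "nat list"
  shows "length x = length y \<Longrightarrow>
    lexordp_eq x y \<longleftrightarrow> (\<forall>t<length x. (\<forall>l<t. x!l = y!l) \<longrightarrow> x!t \<le> y!t)"
proof (induction x arbitrary: y)
  case Nil then show ?case by simp
next
  case (Cons a x)
  then obtain b y' where y: "y = b # y'" "length x = length y'" by (cases y) auto
  have "(\<forall>t<length (a#x). (\<forall>l<t. (a#x)!l = y!l) \<longrightarrow> (a#x)!t \<le> y!t)
     \<longleftrightarrow> a \<le> b \<and> (a = b \<longrightarrow> (\<forall>t<length x. (\<forall>l<t. x!l = y'!l) \<longrightarrow> x!t \<le> y'!t))"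
  proof
    assume H: "\<forall>t<length (a#x). (\<forall>l<t. (a#x)!l = y!l) \<longrightarrow> (a#x)!t \<le> y!t"
    have "a \<le> b" using H[rule_format, of 0] y by simp
    moreover have "a = b \<longrightarrow> (\<forall>t<length x. (\<forall>l<t. x!l = y'!l) \<longrightarrow> x!t \<le> y'!t)"
    proof (intro impI allI)
      fix t assume "a = b" "t < length x" "\<forall>l<t. x!l = y'!l"
      moreover have "\<forall>l<Suc t. (a#x)!l = y!l"
        using \<open>a = b\<close> \<open>\<forall>l<t. x!l = y'!l\<close> y by (auto simp: less_Suc_eq_0_disj)
      ultimately show "x!t \<le> y'!t" using H[rule_format, of "Suc t"] y by simp
    qed
    ultimately show "a \<le> b \<and> (a = b \<longrightarrow> (\<forall>t<length x. (\<forall>l<t. x!l = y'!l) \<longrightarrow> x!t \<le> y'!t))" by blast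
  next
    assume H: "a \<le> b \<and> (a = b \<longrightarrow> (\<forall>t<length x. (\<forall>l<t. x!l = y'!l) \<longrightarrow> x!t \<le> y'!t))"
    show "\<forall>t<length (a#x). (\<forall>l<t. (a#x)!l = y!l) \<longrightarrow> (a#x)!t \<le> y!t"
    proof (intro allI impI)
      fix t assume t: "t < length (a#x)" "\<forall>l<t. (a#x)!l = y!l"
      show "(a#x)!t \<le> y!t"
      proof (cases t)
        case 0 then show ?thesis using H y by simp
      next
        case (Suc t')
        have "a = b" using t(2)[rule_format, of 0] Suc y by simp
        moreover have "\<forall>l<t'. x!l = y'!l" using t(2) Suc y by auto
        ultimately show ?thesis using H Suc y t(1) by auto
      qed
    qed
  qed
  then show ?case using Cons.IH[OF y(2)] y by auto
qed

lemma sorted_nth_le_iff: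
  fixes s :: "nat list"
  assumes "sorted s" "i < length s"
  shows "s!i \<le> v \<longleftrightarrow> i < length (filter (\<lambda>x. x \<le> v) s)"
proof -
  have L: "length (filter (\<lambda>x. x \<le> v) s) = card {l. l < length s \<and> s!l \<le> v}"
    by (simp add: length_filter_conv_card)
  show ?thesis
  proof
    assume "s!i \<le> v"
    then have "{..i} \<subseteq> {l. l < length s \<and> s!l \<le> v}"
      using assms sorted_nth_mono by fastforce
    then have "card {..i} \<le> card {l. l < length s \<and> s!l \<le> v}"
      by (intro card_mono) auto
    then show "i < length (filter (\<lambda>x. x \<le> v) s)" using L by simp
  next
    assume A: "i < length (filter (\<lambda>x. x \<le> v) s)"
    show "s!i \<le> v"
    proof (rule ccontr)
      assume "\<not> s!i \<le> v"
      then have "{l. l < length s \<and> s!l \<le> v} \<subseteq> {..<i}"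
        using assms sorted_nth_mono by (metis (mono_tags, lifting) le_trans mem_Collect_eq lessThan_iff linorder_not_less subsetI)
      then have "card {l. l < length s \<and> s!l \<le> v} \<le> card {..<i}"
        by (intro card_mono) auto
      then show False using A L by simp
    qed
  qed
qed

lemma filter_sort_len: "length (filter p (sort xs)) = length (filter p xs)"
proof -
  have "mset (filter p (sort xs)) = mset (filter p xs)" by simp
  then show ?thesis by (metis size_mset)
qed

lemma nu_len: "length (nu n m Q) = m"
  by (simp add: nu_def)

lemma nu_le:
  assumes "j \<le> k" "i < j"
  shows "nu n k Q ! i \<le> nu n j Q ! i"
proof -
  let ?v = "nu n j Q ! i"
  have "i < length (filter (\<lambda>x. x \<le> ?v) (nu n j Q))"
    using sorted_nth_le_iff[of "nu n j Q" i ?v] assms by (simp add: nu_def)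
  also have "length (filter (\<lambda>x. x \<le> ?v) (nu n j Q)) = length (filter (\<lambda>x. x \<le> ?v) (map (colnum n Q) [0..<j]))"
    unfolding nu_def by (rule filter_sort_len)
  also have "\<dots> \<le> length (filter (\<lambda>x. x \<le> ?v) (map (colnum n Q) [0..<k]))"
  proof -
    have "[0..<k] = [0..<j] @ [j..<k]" using assms
      by (metis le_add_diff_inverse upt_add_eq_append zero_le)
    then show ?thesis by simp
  qed
  also have "\<dots> = length (filter (\<lambda>x. x \<le> ?v) (nu n k Q))"
    unfolding nu_def by (rule filter_sort_len[symmetric])
  finally show ?thesis
    using sorted_nth_le_iff[of "nu n k Q" i ?v] assms by (simp add: nu_def)
qed

lemma nu_sorted_P:
  assumes "\<forall>j j'. j < j' \<and> j' < m \<longrightarrow> colnum n P j < colnum n P j'"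
  shows "nu n m P = map (colnum n P) [0..<m]"
proof -
  have "sorted (map (colnum n P) [0..<m])"
    using assms by (auto simp: sorted_iff_nth_mono_less intro: less_imp_le)
  then show ?thesis unfolding nu_def by (simp add: sorted_sort_id)
qed

theorem lemma4p10:
  fixes n k j :: nat and P :: "nat \<Rightarrow> nat \<Rightarrow> bool"
  assumes "minimal_matrix_rep n k P"
    and "1 \<le> j" and "j \<le> k - 1"
  shows "minimal_matrix_rep n j P"
proof -
  have jk: "j \<le> k" using assms by simp
  have D: "distinct_cols n k P" and I: "\<forall>j j'. j < j' \<and> j' < k \<longrightarrow> colnum n P j < colnum n P j'"
    and M: "\<And>S \<sigma>. S \<subseteq> {..<n} \<Longrightarrow> \<sigma> permutes {..<n} \<Longrightarrow> lexordp_eq (nu n k P) (nu n k (flip_perm S \<sigma> P))"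
    using assms(1) unfolding minimal_matrix_rep_def by auto
  have Ij: "\<forall>i i'. i < i' \<and> i' < j \<longrightarrow> colnum n P i < colnum n P i'" using I jk by auto
  have Dj: "distinct_cols n j P" using D jk unfolding distinct_cols_def by auto
  have "lexordp_eq (nu n j P) (nu n j (flip_perm S \<sigma> P))"
    if S: "S \<subseteq> {..<n}" and \<sigma>: "\<sigma> permutes {..<n}" for S \<sigma>
  proof -
    let ?Q = "flip_perm S \<sigma> P"
    let ?c = "nu n k P" and ?a = "nu n j ?Q" and ?e = "nu n k ?Q"
    have cP: "\<And>i. i < k \<Longrightarrow> ?c ! i = colnum n P i" using nu_sorted_P[OF I] by simp
    have cPj: "\<And>i. i < j \<Longrightarrow> nu n j P ! i = colnum n P i" using nu_sorted_P[OF Ij] by simp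
    have Mk: "\<forall>t<k. (\<forall>l<t. ?c!l = ?e!l) \<longrightarrow> ?c!t \<le> ?e!t"
      using M[OF S \<sigma>] lex_char[of ?c ?e] by (simp add: nu_len)
    have ea: "\<And>i. i < j \<Longrightarrow> ?e!i \<le> ?a!i" using nu_le jk by blast
    have "\<forall>t<j. (\<forall>l<t. nu n j P ! l = ?a ! l) \<longrightarrow> nu n j P ! t \<le> ?a ! t"
    proof (intro allI impI)
      fix t assume t: "t < j" and pre: "\<forall>l<t. nu n j P ! l = ?a ! l"
      show "nu n j P ! t \<le> ?a ! t"
      proof (rule ccontr)
        assume N: "\<not> nu n j P ! t \<le> ?a ! t"
        have eq: "\<forall>l<m. ?e!l = ?c!l" if "m \<le> t" for m
          using that
        proof (induction m)
          case 0 then show ?case by simp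
        next
          case (Suc m)
          have "m < k" "m < j" using Suc.prems t jk by auto
          have "?c!m \<le> ?e!m" using Mk Suc \<open>m < k\<close> by auto
          moreover have "?e!m \<le> ?c!m"
            using ea[OF \<open>m < j\<close>] pre Suc.prems cP cPj \<open>m < k\<close> \<open>m < j\<close> by fastforce
          ultimately show ?case using Suc by (auto simp: less_Suc_eq)
        qed
        have "?c!t \<le> ?e!t" using Mk eq[of t] t jk by auto
        moreover have "?e!t \<le> ?a!t" using ea t by auto
        moreover have "?c!t = nu n j P ! t" using cP cPj t jk by auto
        ultimately show False using N by simp
      qed
    qed
    then show ?thesis using lex_char[of "nu n j P" ?a] by (simp add: nu_len)
  qed
  then show ?thesis unfolding minimal_matrix_rep_def using Ij Dj by blast
qed

end
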